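(* Let $V$ be a finite elementary abelian $2$-group (a finite-dimensional $\mathbb F_2$-vector space) acting simply transitively by translations on a finite set $Q=a+V$, and let $\pi:Q\to X$ be a surjection which is support-equivariant, meaning that $\pi(q)=\pi(q')$ implies $\pi(q+v)=\pi(q'+v)$ for all $q,q'\in Q$ and $v\in V$. Then $|X|$ is a power of $2$. In particular, $|X|\neq 3$. *)

theory Defs
  imports Main
begin

definition simply_transitive_translation ::
  "('q \<Rightarrow> 'v::ab_group_add \<Rightarrow> 'q) \<Rightarrow> 'q set \<Rightarrow> bool" where
  "simply_transitive_translation act Q \<longleftrightarrow>
     (\<forall>q\<in>Q. act q 0 = q) \<and>
     (\<forall>q\<in>Q. \<forall>v w. act (act q v) w = act q (v + w)) \<and>
     (\<forall>q\<in>Q. \<forall>v. act q v \<in> Q) \<and>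
     (\<forall>q\<in>Q. \<forall>q'\<in>Q. \<exists>!v. act q v = q')"

definition support_equivariant ::
  "('q \<Rightarrow> 'v \<Rightarrow> 'q) \<Rightarrow> 'q set \<Rightarrow> ('q \<Rightarrow> 'x) \<Rightarrow> bool" where
  "support_equivariant act Q \<pi> \<longleftrightarrow>
     (\<forall>q\<in>Q. \<forall>q'\<in>Q. \<forall>v. \<pi> q = \<pi> q' \<longrightarrow> \<pi> (act q v) = \<pi> (act q' v))"

end

theory Submission
  imports Defs
begin

definition addclosed :: "'v::ab_group_add set \<Rightarrow> bool" where
  "addclosed S \<longleftrightarrow> 0 \<in> S \<and> (\<forall>x\<in>S. \<forall>y\<in>S. x + y \<in> S)"

lemma index_pow2:
  fixes G K :: "'v::ab_group_add set"
  assumes el: "\<forall>v::'v. v + v = 0"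
  shows "finite G \<Longrightarrow> K \<subseteq> G \<Longrightarrow> addclosed G \<Longrightarrow> addclosed K \<Longrightarrow> \<exists>k::nat. card G = 2 ^ k * card K"
proof (induction "card G - card K" arbitrary: K rule: less_induct)
  case less
  show ?case
  proof (cases "K = G")
    case True then show ?thesis by (intro exI[of _ 0]) simp
  next
    case False
    then obtain g where g: "g \<in> G" "g \<notin> K" using less.prems by blast
    define K' where "K' = K \<union> (+) g ` K"
    have fK: "finite K" using less.prems finite_subset by blast
    have gK: "(+) g ` K \<subseteq> G" using less.prems g unfolding addclosed_def by auto
    have disj: "K \<inter> (+) g ` K = {}"
    proof (rule ccontr)
      assume "K \<inter> (+) g ` K \<noteq> {}"
      then obtain y where y: "y \<in> K" "g + y \<in> K" by auto
      then have "(g + y) + y \<in> K" using less.prems unfolding addclosed_def by blast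
      moreover have "(g + y) + y = g" using el by (simp add: add.assoc)
      ultimately show False using g by simp
    qed
    have cimg: "card ((+) g ` K) = card K" by (simp add: card_image)
    have cK': "card K' = 2 * card K"
      unfolding K'_def using fK disj cimg by (simp add: card_Un_disjoint)
    have sub: "K' \<subseteq> G" using less.prems gK K'_def by auto
    have ac: "addclosed K'"
      unfolding addclosed_def
    proof (intro conjI ballI)
      show "0 \<in> K'" using less.prems unfolding K'_def addclosed_def by auto
    next
      fix x y assume x: "x \<in> K'" and y: "y \<in> K'"
      have cl: "\<And>a b. a \<in> K \<Longrightarrow> b \<in> K \<Longrightarrow> a + b \<in> K" using less.prems unfolding addclosed_def by blast
      show "x + y \<in> K'"
      proof -
        { fix a b assume a: "a \<in> K" and b: "b \<in> K"
          have gg: "g + g = 0" using el by blast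
          have eq0: "(g + a) + (g + b) = (g + g) + (a + b)" by (simp add: algebra_simps)
          have eq: "(g + a) + (g + b) = a + b" unfolding eq0 gg by simp
          have e1: "a + b \<in> K'" using cl[OF a b] K'_def by auto
          have e2: "a + (g + b) \<in> K'" using cl[OF a b] K'_def
            by (simp add: add.left_commute)
          have e3: "(g + a) + b \<in> K'" using cl[OF a b] K'_def
            by (simp add: add.assoc)
          have e4: "(g + a) + (g + b) \<in> K'" unfolding eq by (rule e1)
          note e1 e2 e3 e4 }
        then show ?thesis using x y unfolding K'_def by blast
      qed
    qed
    have pos: "card K > 0" using less.prems fK unfolding addclosed_def by (auto simp: card_gt_0_iff)
    have "card K' \<le> card G" using sub less.prems card_mono by blast
    then have "card G - card K' < card G - card K" using cK' pos by linarith
    from less.hyps[OF this less.prems(1) sub less.prems(3) ac]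
    obtain k where "card G = 2 ^ k * card K'" by blast
    then have "card G = 2 ^ Suc k * card K" using cK' by simp
    then show ?thesis by blast
  qed
qed

theorem proposition6p2:
  fixes act :: "'q \<Rightarrow> 'v::{ab_group_add, finite} \<Rightarrow> 'q"
    and Q :: "'q set" and X :: "'x set" and \<pi> :: "'q \<Rightarrow> 'x" and a :: 'q
  assumes elementary: "\<forall>v::'v. v + v = 0"
    and aQ: "a \<in> Q"
    and act: "simply_transitive_translation act Q"
    and surj: "\<pi> ` Q = X"
    and equiv: "support_equivariant act Q \<pi>"
  shows "(\<exists>k::nat. card X = 2 ^ k) \<and> card X \<noteq> 3"
proof -
  define f where "f = (\<lambda>v. \<pi> (act a v))"
  have A0: "act a 0 = a" and A1: "\<And>v w. act (act a v) w = act a (v + w)"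
    and A2: "\<And>v. act a v \<in> Q" and A3: "\<And>q. q \<in> Q \<Longrightarrow> \<exists>v. act a v = q"
    using act aQ unfolding simply_transitive_translation_def by blast+
  have X: "X = f ` UNIV"
    using surj A2 A3 unfolding f_def by blast
  have E: "\<And>v w u. f v = f w \<Longrightarrow> f (v + u) = f (w + u)"
  proof -
    fix v w u assume "f v = f w"
    then have "\<pi> (act (act a v) u) = \<pi> (act (act a w) u)"
      using equiv A2 unfolding support_equivariant_def f_def by blast
    then show "f (v + u) = f (w + u)" unfolding f_def A1 .
  qed
  define K where "K = {v. f v = f 0}"
  have el: "\<And>v::'v. v + v = 0" using elementary by blast
  have acK: "addclosed K" unfolding addclosed_def K_def
  proof (intro conjI ballI; simp)
    fix x y assume "f x = f 0" "f y = f 0"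
    then have "f (x + y) = f (0 + y)" using E[of x 0 y] by blast
    then show "f (x + y) = f 0" using \<open>f y = f 0\<close> by simp
  qed
  have acU: "addclosed (UNIV::'v set)" unfolding addclosed_def by simp
  obtain k where k: "card (UNIV::'v set) = 2 ^ k * card K"
    using index_pow2[OF elementary finite_UNIV _ acU acK] by blast
  have fib: "\<And>v. f -` {f v} = (+) v ` K"
  proof (rule set_eqI, rule iffI)
    fix v w assume "w \<in> f -` {f v}"
    then have "f (w + v) = f (v + v)" using E[of w v v] by simp
    then have "w + v \<in> K" using el unfolding K_def by simp
    moreover have "v + (w + v) = w + (v + v)" by (simp add: algebra_simps)
    then have "w = v + (w + v)" using el by simp
    ultimately show "w \<in> (+) v ` K" by blast
  next
    fix v w assume "w \<in> (+) v ` K"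
    then obtain c where c: "f c = f 0" "w = v + c" unfolding K_def by auto
    then have "f (c + v) = f (0 + v)" using E[of c 0 v] by blast
    then show "w \<in> f -` {f v}" using c by (simp add: add.commute)
  qed
  have cfib: "\<And>x. x \<in> X \<Longrightarrow> card (f -` {x}) = card K"
    using X fib by (auto simp: card_image)
  have "UNIV = (\<Union>x\<in>X. f -` {x})" using X by auto
  then have "card (UNIV::'v set) = (\<Sum>x\<in>X. card (f -` {x}))"
  proof -
    have "finite X" using X by simp
    moreover have "\<forall>x\<in>X. finite (f -` {x})" by simp
    moreover have "\<forall>x\<in>X. \<forall>y\<in>X. x \<noteq> y \<longrightarrow> f -` {x} \<inter> f -` {y} = {}" by auto
    ultimately have "card (\<Union>x\<in>X. f -` {x}) = (\<Sum>x\<in>X. card (f -` {x}))"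
      by (rule card_UN_disjoint)
    then show ?thesis using \<open>UNIV = (\<Union>x\<in>X. f -` {x})\<close> by simp
  qed
  also have "\<dots> = card X * card K" using cfib by simp
  finally have "card X * card K = 2 ^ k * card K" using k by (simp only: eq_commute)
  moreover have "card K > 0" using acK unfolding addclosed_def by (auto simp: card_gt_0_iff)
  ultimately have cX: "card X = 2 ^ k" using mult_right_cancel by (metis less_irrefl)
  moreover have "(2::nat) ^ k \<noteq> 3"
    proof (cases k)
    case (Suc n) then have "even ((2::nat) ^ k)" by simp
    then show ?thesis by presburger
  qed simp
  ultimately show ?thesis by auto
qed

end
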